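(* Let $L$ be a subspace of $\bigwedge^{k}V$ and let $I\subseteq[n]$. Consider the procedure: while there exists a pair $i<j$ in $I$ with $N_{j\to i}L\neq L$, choose among all such ordered pairs $(j,i)$ the lexicographically last one, and replace $L$ by $N_{j\to i}L$. Then this procedure terminates after at most $|I|-1+\binom{|I|}{2}$ iterations.
   Context: $\mathbb{F}$ is a field (assumed throughout the paper, for expository purposes, to have characteristic not $2$), $V$ is an $n$-dimensional $\mathbb{F}$-vector space with a fixed basis $e_1,\dots,e_n$, and $\bigwedge V=\bigoplus_k\bigwedge^kV$ is its exterior algebra, with monomial basis $e_S=e_{s_1}\wedge\cdots\wedge e_{s_k}$, $S=\{s_1<\cdots<s_k\}\subseteq[n]$, of $\bigwedge^kV$. For $j\in[n]$, $V^{(j)}$ is the span of $\{e_h:h\neq j\}$. Slow shift: for distinct $i,j\in[n]$ and nonzero $m\in\bigwedge^kV$, write uniquely $m=x+e_j\wedge y$ with $x\in\bigwedge^kV^{(j)}$, $y\in\bigwedge^{k-1}V^{(j)}$, and set $N_{j\to i}m=x+e_i\wedge y$ if this is nonzero, and $N_{j\to i}m=e_j\wedge y$ otherwise (this is the limit as $t\to0$ of the projective action of the linear map $e_j\mapsto e_i+te_j$ fixing the other $e_h$). For a subspace $L$ of $\bigwedge^kV$, $N_{j\to i}L$ is the span of $\{N_{j\to i}m:m\in L\setminus\{0\}\}$; it has the same dimension as $L$. The lexicographic order on ordered pairs $(j,i)$ is based on the usual order on $[n]$. *)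

theory Defs
  imports Main
begin

text \<open>Elements of the exterior algebra of V = F^n (basis e_1..e_n) are represented
  by their coefficient functions on monomials: m S is the coefficient of e_S,
  where S is a finite subset of {1..n}.\<close>

definition kvec :: "nat \<Rightarrow> nat \<Rightarrow> (nat set \<Rightarrow> 'a::field) set" where
  "kvec n k = {m. \<forall>S. m S \<noteq> 0 \<longrightarrow> S \<subseteq> {1..n} \<and> card S = k}"

definition is_subspace :: "nat \<Rightarrow> nat \<Rightarrow> (nat set \<Rightarrow> 'a::field) set \<Rightarrow> bool" where
  "is_subspace n k L \<longleftrightarrow> L \<subseteq> kvec n k \<and> (\<lambda>S. 0) \<in> L \<and>
     (\<forall>x\<in>L. \<forall>y\<in>L. (\<lambda>S. x S + y S) \<in> L) \<and> (\<forall>c. \<forall>x\<in>L. (\<lambda>S. c * x S) \<in> L)"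

definition lin_span :: "(nat set \<Rightarrow> 'a::field) set \<Rightarrow> (nat set \<Rightarrow> 'a) set" where
  "lin_span A = {f. \<exists>F c. finite F \<and> F \<subseteq> A \<and> f = (\<lambda>S. \<Sum>m\<in>F. c m * m S)}"

text \<open>sign of moving e_j past the elements of T smaller than j\<close>
definition ext_sign :: "nat \<Rightarrow> nat set \<Rightarrow> 'a::field" where
  "ext_sign j T = (-1) ^ card {t\<in>T. t < j}"

definition wedge_e :: "nat \<Rightarrow> (nat set \<Rightarrow> 'a::field) \<Rightarrow> (nat set \<Rightarrow> 'a)" where
  "wedge_e i y = (\<lambda>S. if i \<in> S then ext_sign i (S - {i}) * y (S - {i}) else 0)"

text \<open>m = x + e_j \<and> y with x, y not involving e_j\<close>
definition xpart :: "nat \<Rightarrow> (nat set \<Rightarrow> 'a::field) \<Rightarrow> (nat set \<Rightarrow> 'a)" where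
  "xpart j m = (\<lambda>S. if j \<in> S then 0 else m S)"

definition ypart :: "nat \<Rightarrow> (nat set \<Rightarrow> 'a::field) \<Rightarrow> (nat set \<Rightarrow> 'a)" where
  "ypart j m = (\<lambda>T. if j \<in> T then 0 else ext_sign j T * m (insert j T))"

definition slow_shift :: "nat \<Rightarrow> nat \<Rightarrow> (nat set \<Rightarrow> 'a::field) \<Rightarrow> (nat set \<Rightarrow> 'a)" where
  "slow_shift j i m =
     (let r = (\<lambda>S. xpart j m S + wedge_e i (ypart j m) S)
      in if r \<noteq> (\<lambda>S. 0) then r else wedge_e j (ypart j m))"

definition shift_space :: "nat \<Rightarrow> nat \<Rightarrow> (nat set \<Rightarrow> 'a::field) set \<Rightarrow> (nat set \<Rightarrow> 'a) set" where
  "shift_space j i L = lin_span {slow_shift j i m | m. m \<in> L \<and> m \<noteq> (\<lambda>S. 0)}"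

definition bad_pairs :: "nat set \<Rightarrow> (nat set \<Rightarrow> 'a::field) set \<Rightarrow> (nat \<times> nat) set" where
  "bad_pairs I L = {(j, i). i \<in> I \<and> j \<in> I \<and> i < j \<and> shift_space j i L \<noteq> L}"

definition lex_le :: "nat \<times> nat \<Rightarrow> nat \<times> nat \<Rightarrow> bool" where
  "lex_le p q \<longleftrightarrow> fst p < fst q \<or> (fst p = fst q \<and> snd p \<le> snd q)"

definition lex_last :: "(nat \<times> nat) set \<Rightarrow> nat \<times> nat" where
  "lex_last P = (THE p. p \<in> P \<and> (\<forall>q\<in>P. lex_le q p))"

definition proc_step :: "nat set \<Rightarrow> (nat set \<Rightarrow> 'a::field) set \<Rightarrow> (nat set \<Rightarrow> 'a) set" where
  "proc_step I L = (if bad_pairs I L = {} then L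
                    else shift_space (fst (lex_last (bad_pairs I L))) (snd (lex_last (bad_pairs I L))) L)"

end

theory Submission
  imports Defs
begin



definition zeta :: "nat \<Rightarrow> (nat set \<Rightarrow> 'a::field) \<Rightarrow> (nat set \<Rightarrow> 'a)" where
  "zeta j m = (\<lambda>S. if j \<in> S then 0 else m S)"
definition wy :: "nat \<Rightarrow> (nat set \<Rightarrow> 'a::field) \<Rightarrow> (nat set \<Rightarrow> 'a)" where
  "wy j m = (\<lambda>S. if j \<in> S then m S else 0)"
definition sb :: "nat \<Rightarrow> nat \<Rightarrow> (nat set \<Rightarrow> 'a::field) \<Rightarrow> (nat set \<Rightarrow> 'a)" where
  "sb j i m = (\<lambda>S. if j \<in> S then 0 else m S + (if i \<in> S then
      ext_sign i (S - {i}) * ext_sign j (S - {i}) * m (insert j (S - {i})) else 0))"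

lemma ext_sign_sq: "ext_sign a T * ext_sign a T = (1::'a::field)"
  by (simp add: ext_sign_def power_mult_distrib[symmetric])

lemma ext_sign_sq2: "ext_sign a T * (ext_sign a T * x) = (x::'a::field)"
  by (simp add: mult.assoc[symmetric] ext_sign_sq)

lemma ext_sign_nz: "ext_sign a T \<noteq> (0::'a::field)"
  by (simp add: ext_sign_def)

lemmas sgn_simps = ext_sign_sq ext_sign_sq2 ext_sign_nz

lemma diff_diff: "A - B - C = A - (B \<union> C)" by auto
lemma ins_diff: "a \<in> A \<Longrightarrow> insert a (A - B) = A - (B - {a})" by auto
lemmas set_simps = diff_diff ins_diff insert_commute insert_Diff_if

lemma diff_absorb: "x \<notin> A \<Longrightarrow> A - {x} = A" by auto

lemma split3:
  assumes a0: "\<And>R. a \<notin> R \<Longrightarrow> b \<notin> R \<Longrightarrow> c \<notin> R \<Longrightarrow> P (R)"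
   and a1: "\<And>R. a \<notin> R \<Longrightarrow> b \<notin> R \<Longrightarrow> c \<notin> R \<Longrightarrow> P (insert c (R))"
   and a2: "\<And>R. a \<notin> R \<Longrightarrow> b \<notin> R \<Longrightarrow> c \<notin> R \<Longrightarrow> P (insert b (R))"
   and a3: "\<And>R. a \<notin> R \<Longrightarrow> b \<notin> R \<Longrightarrow> c \<notin> R \<Longrightarrow> P (insert c (insert b (R)))"
   and a4: "\<And>R. a \<notin> R \<Longrightarrow> b \<notin> R \<Longrightarrow> c \<notin> R \<Longrightarrow> P (insert a (R))"
   and a5: "\<And>R. a \<notin> R \<Longrightarrow> b \<notin> R \<Longrightarrow> c \<notin> R \<Longrightarrow> P (insert c (insert a (R)))"
   and a6: "\<And>R. a \<notin> R \<Longrightarrow> b \<notin> R \<Longrightarrow> c \<notin> R \<Longrightarrow> P (insert b (insert a (R)))"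
   and a7: "\<And>R. a \<notin> R \<Longrightarrow> b \<notin> R \<Longrightarrow> c \<notin> R \<Longrightarrow> P (insert c (insert b (insert a (R))))"
  shows "P S"
proof -
  have R: "a \<notin> (S - {a,b,c})" "b \<notin> (S - {a,b,c})" "c \<notin> (S - {a,b,c})" by auto
  have e0: "S = (S - {a,b,c})" if "~ a \<in> S" "~ b \<in> S" "~ c \<in> S" using that by auto
  have e1: "S = insert c ((S - {a,b,c}))" if "~ a \<in> S" "~ b \<in> S" "c \<in> S" using that by auto
  have e2: "S = insert b ((S - {a,b,c}))" if "~ a \<in> S" "b \<in> S" "~ c \<in> S" using that by auto
  have e3: "S = insert c (insert b ((S - {a,b,c})))" if "~ a \<in> S" "b \<in> S" "c \<in> S" using that by auto
  have e4: "S = insert a ((S - {a,b,c}))" if "a \<in> S" "~ b \<in> S" "~ c \<in> S" using that by auto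
  have e5: "S = insert c (insert a ((S - {a,b,c})))" if "a \<in> S" "~ b \<in> S" "c \<in> S" using that by auto
  have e6: "S = insert b (insert a ((S - {a,b,c})))" if "a \<in> S" "b \<in> S" "~ c \<in> S" using that by auto
  have e7: "S = insert c (insert b (insert a ((S - {a,b,c}))))" if "a \<in> S" "b \<in> S" "c \<in> S" using that by auto
  show ?thesis by (cases "a \<in> S"; cases "b \<in> S"; cases "c \<in> S"; metis a0[OF R] e0 a1[OF R] e1 a2[OF R] e2 a3[OF R] e3 a4[OF R] e4 a5[OF R] e5 a6[OF R] e6 a7[OF R] e7)
qed

lemma split4:
  assumes a0: "\<And>R. a \<notin> R \<Longrightarrow> b \<notin> R \<Longrightarrow> c \<notin> R \<Longrightarrow> d \<notin> R \<Longrightarrow> P (R)"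
   and a1: "\<And>R. a \<notin> R \<Longrightarrow> b \<notin> R \<Longrightarrow> c \<notin> R \<Longrightarrow> d \<notin> R \<Longrightarrow> P (insert d (R))"
   and a2: "\<And>R. a \<notin> R \<Longrightarrow> b \<notin> R \<Longrightarrow> c \<notin> R \<Longrightarrow> d \<notin> R \<Longrightarrow> P (insert c (R))"
   and a3: "\<And>R. a \<notin> R \<Longrightarrow> b \<notin> R \<Longrightarrow> c \<notin> R \<Longrightarrow> d \<notin> R \<Longrightarrow> P (insert d (insert c (R)))"
   and a4: "\<And>R. a \<notin> R \<Longrightarrow> b \<notin> R \<Longrightarrow> c \<notin> R \<Longrightarrow> d \<notin> R \<Longrightarrow> P (insert b (R))"
   and a5: "\<And>R. a \<notin> R \<Longrightarrow> b \<notin> R \<Longrightarrow> c \<notin> R \<Longrightarrow> d \<notin> R \<Longrightarrow> P (insert d (insert b (R)))"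
   and a6: "\<And>R. a \<notin> R \<Longrightarrow> b \<notin> R \<Longrightarrow> c \<notin> R \<Longrightarrow> d \<notin> R \<Longrightarrow> P (insert c (insert b (R)))"
   and a7: "\<And>R. a \<notin> R \<Longrightarrow> b \<notin> R \<Longrightarrow> c \<notin> R \<Longrightarrow> d \<notin> R \<Longrightarrow> P (insert d (insert c (insert b (R))))"
   and a8: "\<And>R. a \<notin> R \<Longrightarrow> b \<notin> R \<Longrightarrow> c \<notin> R \<Longrightarrow> d \<notin> R \<Longrightarrow> P (insert a (R))"
   and a9: "\<And>R. a \<notin> R \<Longrightarrow> b \<notin> R \<Longrightarrow> c \<notin> R \<Longrightarrow> d \<notin> R \<Longrightarrow> P (insert d (insert a (R)))"
   and a10: "\<And>R. a \<notin> R \<Longrightarrow> b \<notin> R \<Longrightarrow> c \<notin> R \<Longrightarrow> d \<notin> R \<Longrightarrow> P (insert c (insert a (R)))"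
   and a11: "\<And>R. a \<notin> R \<Longrightarrow> b \<notin> R \<Longrightarrow> c \<notin> R \<Longrightarrow> d \<notin> R \<Longrightarrow> P (insert d (insert c (insert a (R))))"
   and a12: "\<And>R. a \<notin> R \<Longrightarrow> b \<notin> R \<Longrightarrow> c \<notin> R \<Longrightarrow> d \<notin> R \<Longrightarrow> P (insert b (insert a (R)))"
   and a13: "\<And>R. a \<notin> R \<Longrightarrow> b \<notin> R \<Longrightarrow> c \<notin> R \<Longrightarrow> d \<notin> R \<Longrightarrow> P (insert d (insert b (insert a (R))))"
   and a14: "\<And>R. a \<notin> R \<Longrightarrow> b \<notin> R \<Longrightarrow> c \<notin> R \<Longrightarrow> d \<notin> R \<Longrightarrow> P (insert c (insert b (insert a (R))))"
   and a15: "\<And>R. a \<notin> R \<Longrightarrow> b \<notin> R \<Longrightarrow> c \<notin> R \<Longrightarrow> d \<notin> R \<Longrightarrow> P (insert d (insert c (insert b (insert a (R)))))"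
  shows "P S"
proof -
  have R: "a \<notin> (S - {a,b,c,d})" "b \<notin> (S - {a,b,c,d})" "c \<notin> (S - {a,b,c,d})" "d \<notin> (S - {a,b,c,d})" by auto
  have e0: "S = (S - {a,b,c,d})" if "~ a \<in> S" "~ b \<in> S" "~ c \<in> S" "~ d \<in> S" using that by auto
  have e1: "S = insert d ((S - {a,b,c,d}))" if "~ a \<in> S" "~ b \<in> S" "~ c \<in> S" "d \<in> S" using that by auto
  have e2: "S = insert c ((S - {a,b,c,d}))" if "~ a \<in> S" "~ b \<in> S" "c \<in> S" "~ d \<in> S" using that by auto
  have e3: "S = insert d (insert c ((S - {a,b,c,d})))" if "~ a \<in> S" "~ b \<in> S" "c \<in> S" "d \<in> S" using that by auto
  have e4: "S = insert b ((S - {a,b,c,d}))" if "~ a \<in> S" "b \<in> S" "~ c \<in> S" "~ d \<in> S" using that by auto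
  have e5: "S = insert d (insert b ((S - {a,b,c,d})))" if "~ a \<in> S" "b \<in> S" "~ c \<in> S" "d \<in> S" using that by auto
  have e6: "S = insert c (insert b ((S - {a,b,c,d})))" if "~ a \<in> S" "b \<in> S" "c \<in> S" "~ d \<in> S" using that by auto
  have e7: "S = insert d (insert c (insert b ((S - {a,b,c,d}))))" if "~ a \<in> S" "b \<in> S" "c \<in> S" "d \<in> S" using that by auto
  have e8: "S = insert a ((S - {a,b,c,d}))" if "a \<in> S" "~ b \<in> S" "~ c \<in> S" "~ d \<in> S" using that by auto
  have e9: "S = insert d (insert a ((S - {a,b,c,d})))" if "a \<in> S" "~ b \<in> S" "~ c \<in> S" "d \<in> S" using that by auto
  have e10: "S = insert c (insert a ((S - {a,b,c,d})))" if "a \<in> S" "~ b \<in> S" "c \<in> S" "~ d \<in> S" using that by auto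
  have e11: "S = insert d (insert c (insert a ((S - {a,b,c,d}))))" if "a \<in> S" "~ b \<in> S" "c \<in> S" "d \<in> S" using that by auto
  have e12: "S = insert b (insert a ((S - {a,b,c,d})))" if "a \<in> S" "b \<in> S" "~ c \<in> S" "~ d \<in> S" using that by auto
  have e13: "S = insert d (insert b (insert a ((S - {a,b,c,d}))))" if "a \<in> S" "b \<in> S" "~ c \<in> S" "d \<in> S" using that by auto
  have e14: "S = insert c (insert b (insert a ((S - {a,b,c,d}))))" if "a \<in> S" "b \<in> S" "c \<in> S" "~ d \<in> S" using that by auto
  have e15: "S = insert d (insert c (insert b (insert a ((S - {a,b,c,d})))))" if "a \<in> S" "b \<in> S" "c \<in> S" "d \<in> S" using that by auto
  show ?thesis by (cases "a \<in> S"; cases "b \<in> S"; cases "c \<in> S"; cases "d \<in> S"; metis a0[OF R] e0 a1[OF R] e1 a2[OF R] e2 a3[OF R] e3 a4[OF R] e4 a5[OF R] e5 a6[OF R] e6 a7[OF R] e7 a8[OF R] e8 a9[OF R] e9 a10[OF R] e10 a11[OF R] e11 a12[OF R] e12 a13[OF R] e13 a14[OF R] e14 a15[OF R] e15)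
qed

lemma fin_less: "finite {t\<in>T. t < (a::nat)}"
  by (rule finite_subset[of _ "{..<a}"]) auto

lemma ext_sign_insert: "ext_sign a (insert b T) = (if b \<in> T then ext_sign a T else
   if b < a then - ext_sign a T else (ext_sign a T :: 'a::field))"
proof (cases "b \<in> T")
  case True then show ?thesis by (simp add: insert_absorb)
next
  case False
  have "b < a \<Longrightarrow> {t\<in>insert b T. t < a} = insert b {t\<in>T. t < a}" by auto
  moreover have "\<not> b < a \<Longrightarrow> {t\<in>insert b T. t < a} = {t\<in>T. t < a}" by auto
  ultimately show ?thesis using fin_less[of T a] False
    by (auto simp: ext_sign_def)
qed

lemma ext_sign_remove: "ext_sign a (T - {b}) = (if b \<in> T \<and> b < a then - ext_sign a T else (ext_sign a T :: 'a::field))"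
proof (cases "b \<in> T")
  case True
  then have "T = insert b (T - {b})" by auto
  then have "ext_sign a T = (ext_sign a (insert b (T - {b})) :: 'a)" by simp
  also have "... = (if b < a then - ext_sign a (T - {b}) else ext_sign a (T - {b}))"
    by (subst ext_sign_insert) simp
  finally show ?thesis using True by auto
qed simp

lemma wedge_ypart: "wedge_e j (ypart j m) = wy j m"
  by (rule ext) (auto simp: wedge_e_def ypart_def wy_def insert_absorb mult.assoc[symmetric] ext_sign_sq)

lemma sb_eq: "i \<noteq> j \<Longrightarrow> (\<lambda>S. xpart j m S + wedge_e i (ypart j m) S) = sb j i m"
  by (rule ext) (auto simp: wedge_e_def ypart_def sb_def xpart_def)

lemma slow_shift_eq: "i \<noteq> j \<Longrightarrow> slow_shift j i m = (if sb j i m \<noteq> (\<lambda>S. 0) then sb j i m else wy j m)"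
  by (simp add: slow_shift_def sb_eq wedge_ypart Let_def)




lemmas pw_simps = sb_def wy_def zeta_def ext_sign_insert insert_Diff_if diff_absorb insert_commute sgn_simps

lemma A5b:
  fixes m :: "nat set \<Rightarrow> 'a::field"
  assumes "i < j" "j < j'"
  shows "sb j' j (sb j i m) = (\<lambda>S. sb j i (zeta j' m) S + wy j (\<lambda>S. sb j' j (wy j' m) S - sb j' i (wy j' m) S) S)"
proof (rule ext)
  fix S
  show "sb j' j (sb j i m) S = sb j i (zeta j' m) S + wy j (\<lambda>S. sb j' j (wy j' m) S - sb j' i (wy j' m) S) S"
    using assms apply (induct S rule: split3[of i j j']) apply (auto simp: pw_simps) apply ((simp_all add: algebra_simps sgn_simps)?) done
qed

lemma A5a:
  fixes m :: "nat set \<Rightarrow> 'a::field"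
  assumes "i < j" "j < j'"
  shows "sb j i (\<lambda>S. sb j' j (wy j' m) S - sb j' i (wy j' m) S) = (\<lambda>S. 0)"
proof (rule ext)
  fix S
  show "sb j i (\<lambda>S. sb j' j (wy j' m) S - sb j' i (wy j' m) S) S = 0"
    using assms apply (induct S rule: split3[of i j j']) apply (auto simp: pw_simps) apply ((simp_all add: algebra_simps sgn_simps)?) done
qed

lemma C1:
  fixes m :: "nat set \<Rightarrow> 'a::field"
  assumes "i < j" "j < j'" "i' < j'" "i' \<noteq> j"
  shows "sb j' i' (sb j i m) = sb j i (sb j' i' m)"
proof (rule ext)
  fix S
  show "sb j' i' (sb j i m) S = sb j i (sb j' i' m) S"
  proof (cases "i' = i")
    case True
    then show ?thesis
      using assms apply (induct S rule: split3[of i j j']) apply (auto simp: pw_simps) apply ((simp_all add: algebra_simps sgn_simps)?) done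
  next
    case False
    then show ?thesis
      using assms apply (induct S rule: split4[of i j j' i']) apply (auto simp: pw_simps) apply ((simp_all add: algebra_simps sgn_simps)?) done
  qed
qed



definition lsub :: "(nat set \<Rightarrow> 'a::field) set \<Rightarrow> bool" where
  "lsub L \<longleftrightarrow> (\<lambda>S. 0) \<in> L \<and> (\<forall>x\<in>L. \<forall>y\<in>L. (\<lambda>S. x S + y S) \<in> L) \<and> (\<forall>c. \<forall>x\<in>L. (\<lambda>S. c * x S) \<in> L)"

definition lin :: "((nat set \<Rightarrow> 'a::field) \<Rightarrow> (nat set \<Rightarrow> 'a)) \<Rightarrow> bool" where
  "lin f \<longleftrightarrow> (\<forall>x y. f (\<lambda>S. x S + y S) = (\<lambda>S. f x S + f y S)) \<and> (\<forall>c x. f (\<lambda>S. c * x S) = (\<lambda>S. c * f x S))"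

lemma lsub_0: "lsub L \<Longrightarrow> (\<lambda>S. 0) \<in> L" by (simp add: lsub_def)
lemma lsub_add: "lsub L \<Longrightarrow> x \<in> L \<Longrightarrow> y \<in> L \<Longrightarrow> (\<lambda>S. x S + y S) \<in> L" by (simp add: lsub_def)
lemma lsub_smult: "lsub L \<Longrightarrow> x \<in> L \<Longrightarrow> (\<lambda>S. c * x S) \<in> L" by (simp add: lsub_def)
lemma lsub_diff: "lsub L \<Longrightarrow> x \<in> L \<Longrightarrow> y \<in> L \<Longrightarrow> (\<lambda>S. x S - y S) \<in> L"
proof -
  assume a: "lsub L" "x \<in> L" "y \<in> L"
  then have "(\<lambda>S. x S + (- 1) * y S) \<in> L" using lsub_add lsub_smult by blast
  then show ?thesis by simp
qed

lemma lin_0: "lin f \<Longrightarrow> f (\<lambda>S. 0) = (\<lambda>S. 0)"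
proof -
  assume "lin f"
  then have "\<forall>c x. f (\<lambda>S. c * x S) = (\<lambda>S. c * f x S)" unfolding lin_def by blast
  from this[rule_format, of 0 "\<lambda>T. 0"] show ?thesis by simp
qed

lemma span_sup: "A \<subseteq> lin_span A"
proof
  fix a assume "a \<in> A"
  then show "a \<in> lin_span A" unfolding lin_span_def
    by (intro CollectI exI[of _ "{a}"] exI[of _ "\<lambda>_. 1"]) auto
qed

lemma span_min:
  assumes "lsub M" "A \<subseteq> M"
  shows "lin_span A \<subseteq> M"
proof
  fix x assume "x \<in> lin_span A"
  then obtain F c where F: "finite F" "F \<subseteq> A" and x: "x = (\<lambda>S. \<Sum>m\<in>F. c m * m S)"
    unfolding lin_span_def by blast
  have "(\<lambda>S. \<Sum>m\<in>F. c m * m S) \<in> M" using F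
  proof (induction F rule: finite_induct)
    case empty then show ?case using assms lsub_0 by simp
  next
    case (insert a F)
    then have "(\<lambda>S. c a * a S) \<in> M" using assms lsub_smult by blast
    with insert show ?case using lsub_add[OF assms(1)] by simp
  qed
  then show "x \<in> M" using x by simp
qed

lemma span_lsub: "lsub (lin_span A)"
proof -
  have z: "(\<lambda>S. 0) \<in> lin_span A" unfolding lin_span_def
    by (intro CollectI exI[of _ "{}"]) auto
  have a: "(\<lambda>S. x S + y S) \<in> lin_span A" if xA: "x \<in> lin_span A" and yA: "y \<in> lin_span A" for x y
  proof -
    obtain F1 c1 where F1: "finite F1" "F1 \<subseteq> A" "x = (\<lambda>S. \<Sum>m\<in>F1. c1 m * m S)"
      using xA unfolding lin_span_def mem_Collect_eq by (elim exE conjE) blast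
    obtain F2 c2 where F2: "finite F2" "F2 \<subseteq> A" "y = (\<lambda>S. \<Sum>m\<in>F2. c2 m * m S)"
      using yA unfolding lin_span_def mem_Collect_eq by (elim exE conjE) blast
    define c where "c m = (if m \<in> F1 then c1 m else 0) + (if m \<in> F2 then c2 m else 0)" for m
    have "(\<lambda>S. x S + y S) = (\<lambda>S. \<Sum>m\<in>F1 \<union> F2. c m * m S)"
    proof
      fix S
      have e1: "(\<Sum>m\<in>F1 \<union> F2. c m * m S) = (\<Sum>m\<in>F1 \<union> F2. (if m \<in> F1 then c1 m * m S else 0))
           + (\<Sum>m\<in>F1 \<union> F2. (if m \<in> F2 then c2 m * m S else 0))"
        unfolding sum.distrib[symmetric] by (rule sum.cong) (simp_all add: c_def distrib_right)
      have e2: "(\<Sum>m\<in>F1 \<union> F2. (if m \<in> F1 then c1 m * m S else 0)) = (\<Sum>m\<in>F1. c1 m * m S)"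
        using sum.inter_restrict[of "F1 \<union> F2" "\<lambda>m. c1 m * m S" F1] F1 F2
        by (simp add: Int_absorb1)
      have e3: "(\<Sum>m\<in>F1 \<union> F2. (if m \<in> F2 then c2 m * m S else 0)) = (\<Sum>m\<in>F2. c2 m * m S)"
        using sum.inter_restrict[of "F1 \<union> F2" "\<lambda>m. c2 m * m S" F2] F1 F2
        by (simp add: Int_absorb1)
      have "(\<Sum>m\<in>F1 \<union> F2. c m * m S) = (\<Sum>m\<in>F1. c1 m * m S) + (\<Sum>m\<in>F2. c2 m * m S)"
        using e1 e2 e3 by presburger
      then show "x S + y S = (\<Sum>m\<in>F1 \<union> F2. c m * m S)" using F1 F2 by simp
    qed
    then show ?thesis unfolding lin_span_def using F1 F2
      by (intro CollectI exI[of _ "F1 \<union> F2"] exI[of _ c]) simp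
  qed
  have s: "(\<lambda>S. c * x S) \<in> lin_span A" if xA: "x \<in> lin_span A" for x c
  proof -
    obtain F1 c1 where F1: "finite F1" "F1 \<subseteq> A" "x = (\<lambda>S. \<Sum>m\<in>F1. c1 m * m S)"
      using xA unfolding lin_span_def mem_Collect_eq by (elim exE conjE) blast
    have "(\<lambda>S. c * x S) = (\<lambda>S. \<Sum>m\<in>F1. (c * c1 m) * m S)"
      using F1 by (simp add: sum_distrib_left mult.assoc)
    then show ?thesis unfolding lin_span_def using F1
      by (intro CollectI exI[of _ "F1"] exI[of _ "\<lambda>m. c * c1 m"]) simp
  qed
  show ?thesis unfolding lsub_def using z a s by blast
qed

lemma span_map:
  assumes "lin f" "lsub M" "\<And>a. a \<in> A \<Longrightarrow> f a \<in> M" "x \<in> lin_span A"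
  shows "f x \<in> M"
proof -
  have fa: "f (\<lambda>S. x S + y S) = (\<lambda>S. f x S + f y S)" for x y using assms(1) unfolding lin_def by blast
  have fs: "f (\<lambda>S. c * x S) = (\<lambda>S. c * f x S)" for c x using assms(1) unfolding lin_def by blast
  have "lsub {x. f x \<in> M}"
    unfolding lsub_def
  proof (intro conjI ballI allI)
    show "(\<lambda>S. 0) \<in> {x. f x \<in> M}" using lin_0[OF assms(1)] lsub_0[OF assms(2)] by simp
  next
    fix x y assume "x \<in> {x. f x \<in> M}" "y \<in> {x. f x \<in> M}"
    then show "(\<lambda>S. x S + y S) \<in> {x. f x \<in> M}" unfolding mem_Collect_eq fa using lsub_add[OF assms(2)] by blast
  next
    fix c x assume "x \<in> {x. f x \<in> M}"
    then show "(\<lambda>S. c * x S) \<in> {x. f x \<in> M}" unfolding mem_Collect_eq fs using lsub_smult[OF assms(2)] by blast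
  qed
  moreover have "A \<subseteq> {x. f x \<in> M}" using assms(3) by auto
  ultimately show ?thesis using span_min assms(4) by blast
qed




lemma lin_sb: "lin (sb j i)" unfolding lin_def sb_def by (auto simp: fun_eq_iff algebra_simps)
lemma lin_zeta: "lin (zeta j)" unfolding lin_def zeta_def by (auto simp: fun_eq_iff)
lemma lin_wy: "lin (wy j)" unfolding lin_def wy_def by (auto simp: fun_eq_iff)
lemma lin_id: "lin (\<lambda>x. x)" unfolding lin_def by auto

lemma sb_0: "sb j i (\<lambda>S. 0) = (\<lambda>S. 0)" by (simp add: sb_def fun_eq_iff)
lemma zeta_0: "zeta j (\<lambda>S. 0) = (\<lambda>S. 0)" by (simp add: zeta_def fun_eq_iff)
lemma wy_0: "wy j (\<lambda>S. 0) = (\<lambda>S. 0)" by (simp add: wy_def fun_eq_iff)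

lemma I1: "m = (\<lambda>S. zeta j m S + wy j m S)" by (simp add: zeta_def wy_def fun_eq_iff)

lemma I1': "wy j m = (\<lambda>S. m S - zeta j m S)" by (simp add: zeta_def wy_def fun_eq_iff)

definition free :: "nat \<Rightarrow> (nat set \<Rightarrow> 'a::field) \<Rightarrow> bool" where
  "free j u \<longleftrightarrow> (\<forall>S. j \<in> S \<longrightarrow> u S = 0)"

lemma free_sb: "free j (sb j i m)" by (simp add: free_def sb_def)
lemma free_zeta: "free j (zeta j m)" by (simp add: free_def zeta_def)
lemma sb_free: "free j u \<Longrightarrow> i \<noteq> j \<Longrightarrow> sb j i u = u"
  by (auto simp: free_def sb_def fun_eq_iff)
lemma zeta_free: "free j u \<Longrightarrow> zeta j u = u"
  by (auto simp: free_def zeta_def fun_eq_iff)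
lemma wy_free: "free j u \<Longrightarrow> wy j u = (\<lambda>S. 0)"
  by (auto simp: free_def wy_def fun_eq_iff)
lemma wy_wy: "wy j (wy j m) = wy j m" by (simp add: wy_def fun_eq_iff)
lemma zeta_wy: "zeta j (wy j m) = (\<lambda>S. 0)" by (simp add: wy_def zeta_def fun_eq_iff)

lemma I4: "sb j i (wy j m) = (\<lambda>S. sb j i m S - zeta j m S)"
  by (auto simp: sb_def wy_def zeta_def fun_eq_iff)

lemma Z1: "j' \<noteq> i \<Longrightarrow> j' \<noteq> j \<Longrightarrow> zeta j' (sb j i m) = sb j i (zeta j' m)"
  by (auto simp: sb_def zeta_def fun_eq_iff)
lemma Z2: "zeta j' (wy j m) = wy j (zeta j' m)"
  by (auto simp: wy_def zeta_def fun_eq_iff)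
lemma W1: "i' \<noteq> j \<Longrightarrow> j' \<noteq> j \<Longrightarrow> sb j' i' (wy j m) = wy j (sb j' i' m)"
  by (auto simp: sb_def wy_def fun_eq_iff)
lemma A6: "j \<noteq> j' \<Longrightarrow> sb j' j (wy j m) = wy j (zeta j' m)"
  by (auto simp: sb_def wy_def zeta_def fun_eq_iff)




definition invar :: "((nat set \<Rightarrow> 'a::field) \<Rightarrow> (nat set \<Rightarrow> 'a)) \<Rightarrow> (nat set \<Rightarrow> 'a) set \<Rightarrow> bool" where
  "invar f L \<longleftrightarrow> (\<forall>m\<in>L. f m \<in> L)"

lemma N_lsub: "lsub (shift_space j i L)"
  unfolding shift_space_def by (rule span_lsub)

lemma N_0: "(\<lambda>S. 0) \<in> shift_space j i L"
  by (rule lsub_0[OF N_lsub])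

lemma N_gen: "m \<in> L \<Longrightarrow> m \<noteq> (\<lambda>S. 0) \<Longrightarrow> slow_shift j i m \<in> shift_space j i L"
proof -
  assume "m \<in> L" "m \<noteq> (\<lambda>S. 0)"
  then have "slow_shift j i m \<in> {slow_shift j i m | m. m \<in> L \<and> m \<noteq> (\<lambda>S. 0)}" by blast
  then show ?thesis unfolding shift_space_def using span_sup by (rule subsetD[rotated])
qed

lemma N1:
  assumes "i \<noteq> j" "lsub L" "m \<in> L"
  shows "sb j i m \<in> shift_space j i L"
proof (cases "sb j i m = (\<lambda>S. 0)")
  case True then show ?thesis using N_0 by simp
next
  case False
  then have "m \<noteq> (\<lambda>S. 0)" using sb_0 by force
  moreover have "slow_shift j i m = sb j i m" using False assms(1) by (simp add: slow_shift_eq)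
  ultimately show ?thesis using N_gen[OF assms(3), of j i] by simp
qed

lemma N2:
  assumes "i \<noteq> j" "lsub L" "m \<in> L" "sb j i m = (\<lambda>S. 0)"
  shows "wy j m \<in> shift_space j i L"
proof (cases "m = (\<lambda>S. 0)")
  case True
  then have "wy j m = (\<lambda>S. 0)" by (simp add: wy_def)
  then show ?thesis using N_0 by simp
next
  case False
  moreover have "slow_shift j i m = wy j m" using assms(1,4) by (simp add: slow_shift_eq)
  ultimately show ?thesis using N_gen[OF assms(3), of j i] by simp
qed

lemma N_map:
  assumes "i \<noteq> j" "lin f" "lsub M"
    "\<And>m. m \<in> L \<Longrightarrow> f (sb j i m) \<in> M"
    "\<And>m. m \<in> L \<Longrightarrow> sb j i m = (\<lambda>S. 0) \<Longrightarrow> f (wy j m) \<in> M"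
    "x \<in> shift_space j i L"
  shows "f x \<in> M"
proof -
  have "f g \<in> M" if gG: "g \<in> {slow_shift j i m | m. m \<in> L \<and> m \<noteq> (\<lambda>S. 0)}" for g
  proof -
    obtain m where m: "m \<in> L" "g = slow_shift j i m" using gG by blast
    show ?thesis
    proof (cases "sb j i m = (\<lambda>S. 0)")
      case True then show ?thesis using m assms(1,5) by (simp add: slow_shift_eq)
    next
      case False then show ?thesis using m assms(1,4) by (simp add: slow_shift_eq)
    qed
  qed
  then show ?thesis using span_map[OF assms(2,3)] assms(6) unfolding shift_space_def by blast
qed

lemma N_zeta:
  assumes "i \<noteq> j" "lsub L"
  shows "invar (zeta j) (shift_space j i L)"
  unfolding invar_def
proof
  fix x assume "x \<in> shift_space j i L"
  then show "zeta j x \<in> shift_space j i L"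
  proof (rule N_map[OF assms(1) lin_zeta N_lsub, rotated -1])
    fix m assume "m \<in> L"
    then show "zeta j (sb j i m) \<in> shift_space j i L"
      using N1 assms zeta_free free_sb by metis
  next
    fix m show "zeta j (wy j m) \<in> shift_space j i L"
      unfolding zeta_wy by (rule N_0)
  qed
qed

lemma stab_if:
  assumes "i \<noteq> j" "lsub L" "invar (zeta j) L" "invar (sb j i) L"
  shows "shift_space j i L = L"
proof
  show "shift_space j i L \<subseteq> L"
  proof
    fix x assume "x \<in> shift_space j i L"
    then show "x \<in> L"
    proof (rule N_map[OF assms(1) lin_id assms(2), rotated -1])
      fix m assume "m \<in> L" then show "sb j i m \<in> L" using assms(4) invar_def by blast
    next
      fix m assume m: "m \<in> L"
      have "zeta j m \<in> L" using assms(3) m invar_def by blast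
      then show "wy j m \<in> L" using lsub_diff[OF assms(2) m] I1'[of j m] by simp
    qed
  qed
next
  show "L \<subseteq> shift_space j i L"
  proof
    fix m assume m: "m \<in> L"
    have z: "zeta j m \<in> L" using assms(3) m invar_def by blast
    have zN: "zeta j m \<in> shift_space j i L"
      using N1[OF assms(1,2) z] unfolding sb_free[OF free_zeta assms(1)] .
    have w: "wy j m \<in> L" using lsub_diff[OF assms(2) m z] I1'[of j m] by simp
    define m' where "m' = (\<lambda>S. wy j m S - sb j i (wy j m) S)"
    have m'L: "m' \<in> L" unfolding m'_def using lsub_diff[OF assms(2) w] assms(4) w invar_def by blast
    have "sb j i m' = (\<lambda>S. sb j i (wy j m) S - sb j i (sb j i (wy j m)) S)"
      unfolding m'_def by (auto simp: sb_def fun_eq_iff algebra_simps)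
    then have s0: "sb j i m' = (\<lambda>S. 0)" by (simp add: sb_free[OF free_sb assms(1)])
    have "wy j m' = (\<lambda>S. wy j (wy j m) S - wy j (sb j i (wy j m)) S)"
      unfolding m'_def by (auto simp: wy_def fun_eq_iff)
    then have "wy j m' = wy j m" by (simp add: wy_wy wy_free[OF free_sb])
    then have wN: "wy j m \<in> shift_space j i L" using N2[OF assms(1,2) m'L s0] by simp
    show "m \<in> shift_space j i L"
      using lsub_add[OF N_lsub zN wN] I1[of m j] by simp
  qed
qed

lemma stab_only:
  assumes "i \<noteq> j" "lsub L" "shift_space j i L = L"
  shows "invar (zeta j) L" "invar (sb j i) L"
  using N_zeta[OF assms(1,2)] N1[OF assms(1,2)] assms(3) unfolding invar_def by simp_all

lemma stab_iff:
  assumes "i \<noteq> j" "lsub L"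
  shows "shift_space j i L = L \<longleftrightarrow> invar (zeta j) L \<and> invar (sb j i) L"
  using stab_if[OF assms] stab_only[OF assms] by blast




lemma N_after:
  assumes "i \<noteq> j" "lsub L" "invar (zeta j) L"
  shows "shift_space j i (shift_space j i L) = shift_space j i L"
proof (rule stab_if[OF assms(1) N_lsub N_zeta[OF assms(1,2)]])
  show "invar (sb j i) (shift_space j i L)" unfolding invar_def
  proof
    fix x assume "x \<in> shift_space j i L"
    then show "sb j i x \<in> shift_space j i L"
    proof (rule N_map[OF assms(1) lin_sb N_lsub, rotated -1])
      fix m assume "m \<in> L"
      then show "sb j i (sb j i m) \<in> shift_space j i L"
        using N1[OF assms(1,2)] by (simp add: sb_free[OF free_sb assms(1)])
    next
      fix m assume m: "m \<in> L" "sb j i m = (\<lambda>S. 0)"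
      have z: "zeta j m \<in> L" using assms(3) m invar_def by blast
      have "zeta j m \<in> shift_space j i L"
        using N1[OF assms(1,2) z] by (simp add: sb_free[OF free_zeta assms(1)])
      then have "(\<lambda>S. 0 - zeta j m S) \<in> shift_space j i L"
        using lsub_diff[OF N_lsub N_0] by blast
      then show "sb j i (wy j m) \<in> shift_space j i L" using m by (simp add: I4)
    qed
  qed
qed

lemma LemB:
  assumes "i \<noteq> j" "i' \<noteq> j" "lsub L" "invar (zeta j) L" "invar (sb j i') L"
  shows "shift_space j i' (shift_space j i L) = shift_space j i L"
proof (rule stab_if[OF assms(2) N_lsub N_zeta[OF assms(1,3)]])
  show "invar (sb j i') (shift_space j i L)" unfolding invar_def
  proof
    fix x assume "x \<in> shift_space j i L"
    then show "sb j i' x \<in> shift_space j i L"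
    proof (rule N_map[OF assms(1) lin_sb N_lsub, rotated -1])
      fix m assume "m \<in> L"
      then show "sb j i' (sb j i m) \<in> shift_space j i L"
        using N1[OF assms(1,3)] by (simp add: sb_free[OF free_sb assms(2)])
    next
      fix m assume m: "m \<in> L"
      have z: "zeta j m \<in> L" using assms(4) m invar_def by blast
      have zN: "zeta j m \<in> shift_space j i L"
        using N1[OF assms(1,3) z] by (simp add: sb_free[OF free_zeta assms(1)])
      have s: "sb j i' m \<in> L" using assms(5) m invar_def by blast
      have sN: "sb j i' m \<in> shift_space j i L"
        using N1[OF assms(1,3) s] by (simp add: sb_free[OF free_sb assms(1)])
      show "sb j i' (wy j m) \<in> shift_space j i L"
        using lsub_diff[OF N_lsub sN zN] by (simp add: I4)
    qed
  qed
qed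

lemma LemA:
  assumes "i < j" "j < j'" "i' < j'" "lsub L"
    "invar (zeta j') L" "invar (sb j' j) L" "invar (sb j' i) L" "invar (sb j' i') L"
  shows "shift_space j' i' (shift_space j i L) = shift_space j i L"
proof -
  have ij: "i \<noteq> j" using assms by simp
  have i'j': "i' \<noteq> j'" using assms by simp
  have inL: "f m \<in> L" if "invar f L" "m \<in> L" for f m using that invar_def by blast
  have wyL: "wy j' m \<in> L" if "m \<in> L" for m
    using lsub_diff[OF assms(4) that inL[OF assms(5) that]] by (simp add: I1')
  have zN: "invar (zeta j') (shift_space j i L)" unfolding invar_def
  proof
    fix x assume "x \<in> shift_space j i L"
    then show "zeta j' x \<in> shift_space j i L"
    proof (rule N_map[OF ij lin_zeta N_lsub, rotated -1])
      fix m assume m: "m \<in> L"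
      then show "zeta j' (sb j i m) \<in> shift_space j i L"
        using N1[OF ij assms(4) inL[OF assms(5) m]] assms by (simp add: Z1)
    next
      fix m assume m: "m \<in> L" "sb j i m = (\<lambda>S. 0)"
      have "sb j i (zeta j' m) = (\<lambda>S. 0)"
        using Z1[of j' i j m] assms m by (simp add: zeta_0)
      then show "zeta j' (wy j m) \<in> shift_space j i L"
        using N2[OF ij assms(4) inL[OF assms(5) m(1)]] by (simp add: Z2)
    qed
  qed
  have sN: "invar (sb j' i') (shift_space j i L)" unfolding invar_def
  proof
    fix x assume "x \<in> shift_space j i L"
    then show "sb j' i' x \<in> shift_space j i L"
    proof (rule N_map[OF ij lin_sb N_lsub, rotated -1])
      fix m assume m: "m \<in> L"
      show "sb j' i' (sb j i m) \<in> shift_space j i L"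
      proof (cases "i' = j")
        case True
        define D where "D = (\<lambda>S. sb j' j (wy j' m) S - sb j' i (wy j' m) S)"
        have DL: "D \<in> L" unfolding D_def
          using lsub_diff[OF assms(4) inL[OF assms(6) wyL[OF m]] inL[OF assms(7) wyL[OF m]]] .
        have D0: "sb j i D = (\<lambda>S. 0)" unfolding D_def using A5a assms(1,2) by blast
        have "wy j D \<in> shift_space j i L" using N2[OF ij assms(4) DL D0] .
        moreover have "sb j i (zeta j' m) \<in> shift_space j i L"
          using N1[OF ij assms(4) inL[OF assms(5) m]] .
        ultimately have "(\<lambda>S. sb j i (zeta j' m) S + wy j D S) \<in> shift_space j i L"
          using lsub_add[OF N_lsub] by blast
        then show ?thesis using True A5b[OF assms(1,2), of m] unfolding D_def by simp
      next
        case False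
        then show ?thesis
          using N1[OF ij assms(4) inL[OF assms(8) m]] by (simp add: C1[OF assms(1,2,3) False])
      qed
    next
      fix m assume m: "m \<in> L" "sb j i m = (\<lambda>S. 0)"
      show "sb j' i' (wy j m) \<in> shift_space j i L"
      proof (cases "i' = j")
        case True
        have "sb j i (zeta j' m) = (\<lambda>S. 0)"
          using Z1[of j' i j m] assms m by (simp add: zeta_0)
        then show ?thesis
          using N2[OF ij assms(4) inL[OF assms(5) m(1)]] True assms by (simp add: A6)
      next
        case False
        have "sb j i (sb j' i' m) = (\<lambda>S. 0)"
          using C1[OF assms(1,2,3) False, of m] m by (simp add: sb_0)
        then show ?thesis
          using N2[OF ij assms(4) inL[OF assms(8) m(1)]] False assms by (simp add: W1)
      qed
    qed
  qed
  show ?thesis using stab_if[OF i'j' N_lsub zN sN] .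
qed




definition pairsI :: "nat set \<Rightarrow> (nat \<times> nat) set" where
  "pairsI I = {(j, i). i \<in> I \<and> j \<in> I \<and> i < j}"

lemma finite_pairsI: "finite I \<Longrightarrow> finite (pairsI I)"
  by (rule finite_subset[of _ "I \<times> I"]) (auto simp: pairsI_def)

lemma card_pairsI: assumes "finite I" shows "card (pairsI I) \<le> card I choose 2"
proof -
  have "inj_on (\<lambda>(j, i). {i, j}) (pairsI I)"
  proof (rule inj_onI)
    fix p q assume "p \<in> pairsI I" "q \<in> pairsI I" "(\<lambda>(j, i). {i, j}) p = (\<lambda>(j, i). {i, j}) q"
    then show "p = q" unfolding pairsI_def
      by (cases p; cases q) (auto simp: doubleton_eq_iff)
  qed
  moreover have "(\<lambda>(j, i). {i, j}) ` pairsI I \<subseteq> {B. B \<subseteq> I \<and> card B = 2}"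
    unfolding pairsI_def by auto
  ultimately have "card (pairsI I) \<le> card {B. B \<subseteq> I \<and> card B = 2}"
  proof (rule card_inj_on_le)
    show "finite {B. B \<subseteq> I \<and> card B = 2}"
      by (rule finite_subset[of _ "Pow I"]) (use assms in auto)
  qed
  then show ?thesis using n_subsets[OF assms] by simp
qed

lemma bad_sub: "bad_pairs I L \<subseteq> pairsI I"
  unfolding bad_pairs_def pairsI_def by auto

lemma lex_le_trans: "lex_le p q \<Longrightarrow> lex_le q r \<Longrightarrow> lex_le p r"
  unfolding lex_le_def by auto
lemma lex_le_total: "lex_le p q \<or> lex_le q p"
  unfolding lex_le_def by auto
lemma lex_le_antisym: "lex_le p q \<Longrightarrow> lex_le q p \<Longrightarrow> p = q"
  unfolding lex_le_def by (cases p; cases q) auto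

lemma lex_last_prop:
  assumes "finite P" "P \<noteq> {}"
  shows "lex_last P \<in> P \<and> (\<forall>q\<in>P. lex_le q (lex_last P))"
proof -
  define a where "a = Max (fst ` P)"
  have a: "a \<in> fst ` P" using assms unfolding a_def by simp
  define Q where "Q = {p\<in>P. fst p = a}"
  have Q: "finite (snd ` Q)" "snd ` Q \<noteq> {}" using assms a unfolding Q_def by auto
  define b where "b = Max (snd ` Q)"
  have b: "b \<in> snd ` Q" using Q unfolding b_def by simp
  have abP: "(a, b) \<in> P" using b unfolding Q_def by auto
  have max: "\<forall>q\<in>P. lex_le q (a, b)"
  proof
    fix q assume q: "q \<in> P"
    have "fst q \<le> a" using q assms unfolding a_def by simp
    moreover have "fst q = a \<Longrightarrow> snd q \<le> b" using q Q unfolding b_def Q_def by simp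
    ultimately show "lex_le q (a, b)" unfolding lex_le_def by auto
  qed
  have "lex_last P = (a, b)" unfolding lex_last_def
  proof (rule the_equality)
    show "(a, b) \<in> P \<and> (\<forall>q\<in>P. lex_le q (a, b))" using abP max by simp
  next
    fix p assume "p \<in> P \<and> (\<forall>q\<in>P. lex_le q p)"
    then show "p = (a, b)" using abP max lex_le_antisym by blast
  qed
  then show ?thesis using abP max by simp
qed

definition Aset :: "nat set \<Rightarrow> nat \<times> nat \<Rightarrow> (nat \<times> nat) set" where
  "Aset I p = {q \<in> pairsI I. lex_le q p}"
definition Bset :: "nat set \<Rightarrow> nat \<Rightarrow> nat set" where
  "Bset I j = {a \<in> I. a < j \<and> (\<exists>b\<in>I. b < a)}"

definition pot :: "nat set \<Rightarrow> (nat set \<Rightarrow> 'a::field) set \<Rightarrow> nat" where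
  "pot I L = (if bad_pairs I L = {} then 0 else
     card (Aset I (lex_last (bad_pairs I L))) + card (Bset I (fst (lex_last (bad_pairs I L))))
     + (if invar (zeta (fst (lex_last (bad_pairs I L)))) L then 0 else 1))"

lemma proc_lsub: "lsub L \<Longrightarrow> lsub (proc_step I L)"
  unfolding proc_step_def by (simp add: N_lsub)

lemma stab_of_notbad: "(j, i) \<in> pairsI I \<Longrightarrow> (j, i) \<notin> bad_pairs I L \<Longrightarrow> shift_space j i L = L"
  unfolding pairsI_def bad_pairs_def by auto

lemma step:
  fixes L :: "(nat set \<Rightarrow> 'a::field) set"
  assumes fin: "finite I" and L: "lsub L" and bad: "bad_pairs I L \<noteq> {}"
    and bad': "bad_pairs I (proc_step I L) \<noteq> {}"
  shows "pot I (proc_step I L) < pot I L"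
proof -
  have finB: "finite (bad_pairs I M)" for M :: "(nat set \<Rightarrow> 'a) set"
    using finite_subset[OF bad_sub finite_pairsI[OF fin]] .
  obtain j i where ji: "lex_last (bad_pairs I L) = (j, i)" by fastforce
  have jiB: "(j, i) \<in> bad_pairs I L" and jimax: "\<forall>q\<in>bad_pairs I L. lex_le q (j, i)"
    using lex_last_prop[OF finB bad] ji by auto
  have jiP: "i \<in> I" "j \<in> I" "i < j" using jiB unfolding bad_pairs_def by auto
  define L' where "L' = proc_step I L"
  have L'eq: "L' = shift_space j i L" unfolding L'_def proc_step_def using bad ji by simp
  have ij: "i \<noteq> j" using jiP by simp
  have F1: "shift_space b a L = L" if "(b, a) \<in> pairsI I" "\<not> lex_le (b, a) (j, i)" for a b
    using stab_of_notbad[OF that(1)] jimax that(2) by blast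
  have F1i: "invar (zeta b) L \<and> invar (sb b a) L" if "(b, a) \<in> pairsI I" "\<not> lex_le (b, a) (j, i)" for a b
  proof -
    have "a \<noteq> b" using that(1) unfolding pairsI_def by auto
    then show ?thesis using stab_only[OF _ L F1[OF that]] by blast
  qed
  have F2: "shift_space b a L' = L'" if ba: "(b, a) \<in> pairsI I" "\<not> lex_le (b, a) (j, i)" for a b
  proof -
    have abI: "a \<in> I" "b \<in> I" "a < b" using ba(1) unfolding pairsI_def by auto
    show ?thesis
    proof (cases "j < b")
      case True
      have p1: "(b, j) \<in> pairsI I" "\<not> lex_le (b, j) (j, i)" using True jiP abI unfolding pairsI_def lex_le_def by auto
      have p2: "(b, i) \<in> pairsI I" "\<not> lex_le (b, i) (j, i)" using True jiP abI unfolding pairsI_def lex_le_def by auto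
      show ?thesis unfolding L'eq
        using LemA[OF jiP(3) True abI(3) L] F1i[OF p1] F1i[OF p2] F1i[OF ba] by blast
    next
      case False
      then have "b = j" "i < a" using ba(2) unfolding lex_le_def by auto
      then have aj: "a \<noteq> j" and "invar (zeta j) L \<and> invar (sb j a) L" using F1i[OF ba] abI by auto
      then show ?thesis unfolding L'eq \<open>b = j\<close>
        using LemB[OF ij aj L] by blast
    qed
  qed
  have F3: "invar (zeta j) L'" unfolding L'eq using N_zeta[OF ij L] .
  have F4: "shift_space j i L' = L'" if "invar (zeta j) L" unfolding L'eq using N_after[OF ij L that] .
  have bad'': "bad_pairs I L' \<noteq> {}" using bad' L'_def by simp
  obtain j2 i2 where ji2: "lex_last (bad_pairs I L') = (j2, i2)" by fastforce
  have ji2B: "(j2, i2) \<in> bad_pairs I L'"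
    using lex_last_prop[OF finB bad''] ji2 by auto
  have ji2P: "(j2, i2) \<in> pairsI I" using ji2B bad_sub by blast
  have ji2ns: "shift_space j2 i2 L' \<noteq> L'" using ji2B unfolding bad_pairs_def by auto
  have le2: "lex_le (j2, i2) (j, i)" using F2[OF ji2P] ji2ns by blast
  have jiPP: "(j, i) \<in> pairsI I" using jiP unfolding pairsI_def by auto
  have potL: "pot I L = card (Aset I (j, i)) + card (Bset I j) + (if invar (zeta j) L then 0 else 1)"
    unfolding pot_def using bad ji by simp
  have potL': "pot I L' = card (Aset I (j2, i2)) + card (Bset I j2) + (if invar (zeta j2) L' then 0 else 1)"
    unfolding pot_def using bad'' ji2 by simp
  have finA: "finite (Aset I p)" for p unfolding Aset_def using finite_pairsI[OF fin] by simp
  have finBs: "finite (Bset I a)" for a unfolding Bset_def using fin by simp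
  have Asub: "Aset I (j2, i2) \<subseteq> Aset I (j, i)" unfolding Aset_def using le2 lex_le_trans by blast
  have Bsub: "Bset I j2 \<subseteq> Bset I j" using le2 unfolding Bset_def lex_le_def by auto
  have AjiIn: "(j, i) \<in> Aset I (j, i)" unfolding Aset_def lex_le_def using jiPP by simp
  show ?thesis
  proof (cases "j2 < j")
    case True
    have "(j, i) \<notin> Aset I (j2, i2)" unfolding Aset_def lex_le_def using True by auto
    then have cA: "card (Aset I (j2, i2)) < card (Aset I (j, i))"
      using psubset_card_mono[OF finA] Asub AjiIn by blast
    have "j2 \<in> Bset I j" "j2 \<notin> Bset I j2" unfolding Bset_def using True ji2P unfolding pairsI_def by auto
    then have cB: "card (Bset I j2) < card (Bset I j)"
      using psubset_card_mono[OF finBs] Bsub by blast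
    show ?thesis unfolding L'_def[symmetric] potL potL' using cA cB by simp
  next
    case False
    then have j2: "j2 = j" using le2 unfolding lex_le_def by auto
    show ?thesis
    proof (cases "i2 = i")
      case True
      then have "\<not> invar (zeta j) L" using F4 ji2ns j2 by blast
      then show ?thesis unfolding L'_def[symmetric] potL potL' using F3 j2 True by simp
    next
      case False
      then have "(j, i) \<notin> Aset I (j2, i2)" unfolding Aset_def lex_le_def using j2 le2
        unfolding lex_le_def by auto
      then have cA: "card (Aset I (j2, i2)) < card (Aset I (j, i))"
        using psubset_card_mono[OF finA] Asub AjiIn by blast
      show ?thesis unfolding L'_def[symmetric] potL potL' using cA F3 j2 by simp
    qed
  qed
qed




lemma pot_bounds:
  fixes L :: "(nat set \<Rightarrow> 'a::field) set"
  assumes fin: "finite I" and bad: "bad_pairs I L \<noteq> {}"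
  shows "1 \<le> pot I L" "pot I L \<le> card I - 1 + (card I choose 2)"
proof -
  have finB: "finite (bad_pairs I L)"
    using finite_subset[OF bad_sub finite_pairsI[OF fin]] .
  obtain j i where ji: "lex_last (bad_pairs I L) = (j, i)" by fastforce
  have jiB: "(j, i) \<in> bad_pairs I L"
    using lex_last_prop[OF finB bad] ji by auto
  have jiP: "i \<in> I" "j \<in> I" "i < j" using jiB unfolding bad_pairs_def by auto
  have potL: "pot I L = card (Aset I (j, i)) + card (Bset I j) + (if invar (zeta j) L then 0 else 1)"
    unfolding pot_def using bad ji by simp
  have finA: "finite (Aset I (j, i))" unfolding Aset_def using finite_pairsI[OF fin] by simp
  have "(j, i) \<in> Aset I (j, i)" unfolding Aset_def pairsI_def lex_le_def using jiP by simp
  then have "card (Aset I (j, i)) \<ge> 1" using finA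
    by (metis One_nat_def Suc_leI card_gt_0_iff empty_iff)
  then show "1 \<le> pot I L" unfolding potL by simp
  have "card (Aset I (j, i)) \<le> card (pairsI I)"
    by (rule card_mono[OF finite_pairsI[OF fin]]) (auto simp: Aset_def)
  also have "\<dots> \<le> card I choose 2" using card_pairsI[OF fin] .
  finally have cA: "card (Aset I (j, i)) \<le> card I choose 2" .
  define m where "m = Min I"
  have mI: "m \<in> I" using jiP fin unfolding m_def by (metis Min_in empty_iff)
  have mle: "\<forall>b\<in>I. m \<le> b" using fin unfolding m_def by simp
  have "m \<le> i" using mle jiP by simp
  then have mj: "m \<noteq> j" using jiP by simp
  have "Bset I j \<subseteq> I - {j, m}" unfolding Bset_def using mle by force
  then have "card (Bset I j) \<le> card (I - {j, m})" by (rule card_mono[rotated]) (use fin in simp)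
  also have "\<dots> = card I - 2" using mI jiP mj fin by (simp add: card_Diff_subset)
  finally have cB: "card (Bset I j) \<le> card I - 2" .
  have "card I \<ge> 2"
  proof -
    have "{i, j} \<subseteq> I" using jiP by simp
    then have "card {i, j} \<le> card I" using fin card_mono by blast
    then show ?thesis using jiP by simp
  qed
  then show "pot I L \<le> card I - 1 + (card I choose 2)" unfolding potL using cA cB by auto
qed

lemma iter:
  fixes L :: "(nat set \<Rightarrow> 'a::field) set"
  assumes fin: "finite I" and L: "lsub L"
  shows "lsub ((proc_step I ^^ t) L) \<and>
         (bad_pairs I ((proc_step I ^^ t) L) \<noteq> {} \<longrightarrow> pot I ((proc_step I ^^ t) L) + t \<le> pot I L)"
proof (induction t)
  case 0 then show ?case using L by simp
next
  case (Suc t)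
  let ?M = "(proc_step I ^^ t) L"
  have M: "lsub ?M" using Suc.IH by blast
  have eq: "(proc_step I ^^ Suc t) L = proc_step I ?M" by simp
  have "bad_pairs I ?M \<noteq> {}" if b: "bad_pairs I (proc_step I ?M) \<noteq> {}"
  proof
    assume "bad_pairs I ?M = {}"
    then have "proc_step I ?M = ?M" unfolding proc_step_def by simp
    then show False using b \<open>bad_pairs I ?M = {}\<close> by simp
  qed
  then show ?case unfolding eq using Suc.IH proc_lsub[OF M] step[OF fin M] by fastforce
qed

theorem proposition3p10:
  fixes L :: "(nat set \<Rightarrow> 'a::field) set" and n k :: nat and I :: "nat set"
  assumes "(2::'a) \<noteq> 0"
    and "is_subspace n k L"
    and "I \<subseteq> {1..n}"
  shows "\<exists>t \<le> card I - 1 + (card I choose 2). bad_pairs I ((proc_step I ^^ t) L) = {}"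
proof -
  have fin: "finite I" using assms(3) finite_subset by blast
  have L: "lsub L" using assms(2) unfolding is_subspace_def lsub_def by blast
  show ?thesis
  proof (cases "bad_pairs I L = {}")
    case True
    then show ?thesis by (intro exI[of _ 0]) simp
  next
    case False
    define T where "T = pot I L"
    have T: "T \<le> card I - 1 + (card I choose 2)" using pot_bounds[OF fin False] T_def by simp
    have "bad_pairs I ((proc_step I ^^ T) L) = {}"
    proof (rule ccontr)
      assume nb: "bad_pairs I ((proc_step I ^^ T) L) \<noteq> {}"
      then have "pot I ((proc_step I ^^ T) L) + T \<le> T" using iter[OF fin L, of T] T_def by simp
      moreover have "1 \<le> pot I ((proc_step I ^^ T) L)" using pot_bounds(1)[OF fin nb] .
      ultimately show False by simp
    qed
    then show ?thesis using T by blast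
  qed
qed


end
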